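(* For each $N\ge1$ (with $h=1/(N+1)$) let $Q_h=[q_{ij}(h)]_{1\le i,j\le N}\in\mathcal M_N(\mathbb{C})$ be tridiagonal ($q_{ij}(h)=0$ if $|i-j|>1$) and assume: (1) $\max_{1\le j\le N}\{|q_{j,j-1}(h)|,|q_{j,j+1}(h)|\}\to0$ as $h\to0$; (2) $\frac1h\max_{1\le j\le N}|q_{j,j-1}(h)+q_{jj}(h)+q_{j,j+1}(h)|\to0$ as $h\to0$. Let $Y_h=[y_j(h)]_{1\le j\le N}$ and $\Theta_h=[\theta_j(h)]_{1\le j\le N}$ be vectors in $\mathbb{C}^N$ for which there is a constant $C>0$, independent of $h$, with $\max\{\langle K_hY_h,Y_h\rangle,\langle K_h\Theta_h,\Theta_h\rangle\}\le C$. Then $\langle Q_hY_h,\Theta_h\rangle\to0$ as $h\to0$.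
   Context: $K_h=\frac1h\mathrm{tridiag}(-1,2,-1)\in\mathcal M_N(\mathbb{R})$; $\langle U,W\rangle=\sum_j u_j\overline{w_j}$. In conditions (1)-(2), the symbols $q_{1,0}(h)$ and $q_{N,N+1}(h)$, which are not entries of $Q_h$, denote given complex numbers (e.g. $0$). *)

theory Defs
  imports "HOL-Analysis.Analysis"
begin

text \<open>Vectors in C^N are functions nat => complex, used on indices 1..N;
  N x N matrices are functions nat => nat => complex, used on indices 1..N.
  The mesh size is h = 1/(N+1), so h -> 0 iff N -> infinity.\<close>

definition matvec :: "nat \<Rightarrow> (nat \<Rightarrow> nat \<Rightarrow> complex) \<Rightarrow> (nat \<Rightarrow> complex) \<Rightarrow> nat \<Rightarrow> complex" where
  "matvec N A U i = (\<Sum>k\<in>{1..N}. A i k * U k)"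

definition cinnerN :: "nat \<Rightarrow> (nat \<Rightarrow> complex) \<Rightarrow> (nat \<Rightarrow> complex) \<Rightarrow> complex" where
  "cinnerN N U W = (\<Sum>j\<in>{1..N}. U j * cnj (W j))"

text \<open>K_h = (1/h) tridiag(-1,2,-1) with h = 1/(N+1).\<close>
definition Kmat :: "nat \<Rightarrow> nat \<Rightarrow> nat \<Rightarrow> complex" where
  "Kmat N i j = of_nat (N + 1) *
     (if i = j then 2 else if i = j + 1 \<or> j = i + 1 then -1 else 0)"

end

theory Submission
  imports Defs
begin

definition ext :: "nat \<Rightarrow> (nat \<Rightarrow> complex) \<Rightarrow> nat \<Rightarrow> complex" where
  "ext N Y k = (if 1 \<le> k \<and> k \<le> N then Y k else 0)"

lemma Kmat_matvec:
  assumes "1 \<le> i" "i \<le> N"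
  shows "matvec N (Kmat N) Y i = of_nat (N+1) * (2 * ext N Y i - ext N Y (i-1) - ext N Y (i+1))"
proof -
  have "\<And>k. Kmat N i k * Y k = of_nat (N+1) * ((if k = i then 2 * Y k else 0)
      - (if k = i+1 then Y k else 0) - (if k = i - 1 then Y k else 0))"
    using assms by (auto simp: Kmat_def)
  note pt = this
  have "matvec N (Kmat N) Y i = (\<Sum>k\<in>{1..N}. of_nat (N+1) * ((if k = i then 2 * Y k else 0)
      - (if k = i+1 then Y k else 0) - (if k = i - 1 then Y k else 0)))"
    unfolding matvec_def by (simp only: pt)
  also have "\<dots> = of_nat (N+1) * ((\<Sum>k\<in>{1..N}. (if k = i then 2 * Y k else 0))
      - (\<Sum>k\<in>{1..N}. if k = i+1 then Y k else 0) - (\<Sum>k\<in>{1..N}. if k = i - 1 then Y k else 0))"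
    by (simp only: sum_distrib_left[symmetric] sum_subtractf)
  also have "(\<Sum>k\<in>{1..N}. (if k = i then 2 * Y k else 0)) = 2 * ext N Y i"
    using assms by (subst sum.delta) (auto simp: ext_def)
  also have "(\<Sum>k\<in>{1..N}. (if k = i+1 then Y k else 0)) = ext N Y (i+1)"
    by (subst sum.delta) (auto simp: ext_def)
  also have "(\<Sum>k\<in>{1..N}. (if k = i-1 then Y k else 0)) = ext N Y (i-1)"
    by (subst sum.delta) (auto simp: ext_def)
  finally show ?thesis by (simp add: algebra_simps)
qed

lemma telesc_identity:
  fixes z :: "nat \<Rightarrow> complex"
  shows "(\<Sum>i\<in>{1..n}. (2 * z i - z (i-1) - z (i+1)) * cnj (z i)) =
    (\<Sum>i<n. (z (Suc i) - z i) * cnj (z (Suc i) - z i)) + (z n - z (n+1)) * cnj (z n) + (z 1 - z 0) * cnj (z 0)"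
proof (induction n)
  case 0
  then show ?case by (simp add: algebra_simps)
next
  case (Suc n)
  have "(\<Sum>i\<in>{1..Suc n}. (2 * z i - z (i-1) - z (i+1)) * cnj (z i)) =
     (\<Sum>i\<in>{1..n}. (2 * z i - z (i-1) - z (i+1)) * cnj (z i)) + (2 * z (Suc n) - z n - z (Suc n+1)) * cnj (z (Suc n))"
    by simp
  also have "\<dots> = (\<Sum>i<n. (z (Suc i) - z i) * cnj (z (Suc i) - z i)) + (z n - z (n+1)) * cnj (z n) + (z 1 - z 0) * cnj (z 0)
     + (2 * z (Suc n) - z n - z (Suc n+1)) * cnj (z (Suc n))"
    by (simp only: Suc.IH)
  also have "\<dots> = (\<Sum>i<Suc n. (z (Suc i) - z i) * cnj (z (Suc i) - z i)) + (z (Suc n) - z (Suc n+1)) * cnj (z (Suc n)) + (z 1 - z 0) * cnj (z 0)"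
    by (simp add: algebra_simps)
  finally show ?case .
qed

lemma K_inner:
  assumes "N \<ge> 1"
  shows "cinnerN N (matvec N (Kmat N) Y) Y =
    of_nat (N+1) * (\<Sum>i<N+1. (ext N Y (Suc i) - ext N Y i) * cnj (ext N Y (Suc i) - ext N Y i))"
proof -
  let ?z = "ext N Y"
  have "cinnerN N (matvec N (Kmat N) Y) Y = (\<Sum>i\<in>{1..N}. of_nat (N+1) * (2 * ?z i - ?z (i-1) - ?z (i+1)) * cnj (?z i))"
    unfolding cinnerN_def by (rule sum.cong) (auto simp: Kmat_matvec ext_def)
  also have "\<dots> = of_nat (N+1) * (\<Sum>i\<in>{1..N}. (2 * ?z i - ?z (i-1) - ?z (i+1)) * cnj (?z i))"
    by (simp add: sum_distrib_left mult.assoc)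
  also have "\<dots> = of_nat (N+1) * ((\<Sum>i<N. (?z (Suc i) - ?z i) * cnj (?z (Suc i) - ?z i)) + (?z N - ?z (N+1)) * cnj (?z N) + (?z 1 - ?z 0) * cnj (?z 0))"
    by (simp only: telesc_identity)
  also have "?z (N+1) = 0" by (auto simp: ext_def)
  also have "?z 0 = 0" by (auto simp: ext_def)
  also have "(\<Sum>i<N. (?z (Suc i) - ?z i) * cnj (?z (Suc i) - ?z i)) + (?z N - 0) * cnj (?z N) + (?z 1 - 0) * cnj 0
     = (\<Sum>i<N+1. (?z (Suc i) - ?z i) * cnj (?z (Suc i) - ?z i))"
    by (simp add: ext_def)
  finally show ?thesis .
qed


lemma K_re:
  assumes "N \<ge> 1"
  shows "Re (cinnerN N (matvec N (Kmat N) Y) Y) =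
    real (N+1) * (\<Sum>i<N+1. (cmod (ext N Y (Suc i) - ext N Y i))^2)"
proof -
  have "(\<Sum>i<N+1. (ext N Y (Suc i) - ext N Y i) * cnj (ext N Y (Suc i) - ext N Y i))
     = of_real (\<Sum>i<N+1. (cmod (ext N Y (Suc i) - ext N Y i))^2)"
    by (simp only: complex_norm_square[symmetric] of_real_sum)
  then show ?thesis using K_inner[OF assms, of Y] by simp
qed

lemma sum_d_bound:
  assumes "N \<ge> 1" "Re (cinnerN N (matvec N (Kmat N) Y) Y) \<le> C"
  shows "(\<Sum>i<N+1. cmod (ext N Y (Suc i) - ext N Y i)) \<le> sqrt C"
proof (rule real_le_rsqrt)
  have "(\<Sum>i<N+1. cmod (ext N Y (Suc i) - ext N Y i))^2 \<le>
     (\<Sum>i<N+1. (cmod (ext N Y (Suc i) - ext N Y i))^2) * real (card {..<N+1})"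
    by (rule sum_squared_le_sum_of_squares)
  also have "\<dots> = Re (cinnerN N (matvec N (Kmat N) Y) Y)"
    using K_re[OF assms(1)] by simp
  finally show "(\<Sum>i<N+1. cmod (ext N Y (Suc i) - ext N Y i))^2 \<le> C" using assms(2) by linarith
qed

lemma ext_bound:
  "cmod (ext N Y j) \<le> (\<Sum>i<N+1. cmod (ext N Y (Suc i) - ext N Y i))"
proof (cases "j \<le> N")
  case True
  have "(\<Sum>i<j. ext N Y (Suc i) - ext N Y i) = ext N Y j - ext N Y 0"
    by (rule sum_lessThan_telescope)
  then have "ext N Y j = (\<Sum>i<j. ext N Y (Suc i) - ext N Y i)"
    by (simp add: ext_def)
  then have "cmod (ext N Y j) \<le> (\<Sum>i<j. cmod (ext N Y (Suc i) - ext N Y i))"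
    by (simp add: norm_sum)
  also have "\<dots> \<le> (\<Sum>i<N+1. cmod (ext N Y (Suc i) - ext N Y i))"
    by (rule sum_mono2) (use True in auto)
  finally show ?thesis .
next
  case False
  then show ?thesis by (simp add: ext_def sum_nonneg)
qed

lemma Q_matvec:
  assumes tridiag: "\<And>i j. 1 \<le> i \<Longrightarrow> i \<le> N \<Longrightarrow> 1 \<le> j \<Longrightarrow> j \<le> N \<Longrightarrow>
                       (j > i + 1 \<or> i > j + 1) \<Longrightarrow> Q i j = 0"
    and "1 \<le> i" "i \<le> N"
  shows "matvec N Q Y i = Q i (i-1) * ext N Y (i-1) + Q i i * ext N Y i + Q i (i+1) * ext N Y (i+1)"
proof -
  have pt: "\<And>k. k \<in> {1..N} \<Longrightarrow> Q i k * Y k = (if k = i - 1 then Q i k * Y k else 0)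
      + (if k = i then Q i k * Y k else 0) + (if k = i+1 then Q i k * Y k else 0)"
  proof -
    fix k assume k: "k \<in> {1..N}"
    have z: "k \<noteq> i-1 \<Longrightarrow> k \<noteq> i \<Longrightarrow> k \<noteq> i+1 \<Longrightarrow> Q i k = 0"
      apply (rule tridiag[OF assms(2,3)]) using k assms(2) by auto
    show "?thesis k" using z assms(2) by auto
  qed
  have "matvec N Q Y i = (\<Sum>k\<in>{1..N}. (if k = i - 1 then Q i k * Y k else 0)
      + (if k = i then Q i k * Y k else 0) + (if k = i+1 then Q i k * Y k else 0))"
    unfolding matvec_def by (rule sum.cong) (use pt in auto)
  also have "\<dots> = (\<Sum>k\<in>{1..N}. (if k = i - 1 then Q i k * Y k else 0))
      + (\<Sum>k\<in>{1..N}. if k = i then Q i k * Y k else 0) + (\<Sum>k\<in>{1..N}. if k = i+1 then Q i k * Y k else 0)"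
    by (simp only: sum.distrib)
  also have "(\<Sum>k\<in>{1..N}. (if k = i then Q i k * Y k else 0)) = Q i i * ext N Y i"
    using assms by (subst sum.delta) (auto simp: ext_def)
  also have "(\<Sum>k\<in>{1..N}. (if k = i+1 then Q i k * Y k else 0)) = Q i (i+1) * ext N Y (i+1)"
    by (subst sum.delta) (auto simp: ext_def)
  also have "(\<Sum>k\<in>{1..N}. (if k = i-1 then Q i k * Y k else 0)) = Q i (i-1) * ext N Y (i-1)"
    by (subst sum.delta) (auto simp: ext_def)
  finally show ?thesis .
qed

lemma ptw_bound:
  fixes s y a u b v t :: complex
  assumes "norm s \<le> M2" "norm y \<le> K" "norm a \<le> M1" "norm b \<le> M1" "norm t \<le> K"
  shows "norm ((s * y + a * u + b * v) * cnj t) \<le> M2 * K * K + M1 * norm u * K + M1 * norm v * K"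
proof -
  have K: "K \<ge> 0" using assms(2) norm_ge_zero order_trans by blast
  have e: "norm ((s * y + a * u + b * v) * cnj t) = norm (s * y + a * u + b * v) * norm t"
    by (simp add: norm_mult)
  have tr: "norm (s * y + a * u + b * v) \<le> norm s * norm y + norm a * norm u + norm b * norm v"
  proof -
    have "norm (s * y + a * u + b * v) \<le> norm (s * y + a * u) + norm (b * v)"
      by (rule norm_triangle_ineq)
    also have "norm (s * y + a * u) \<le> norm (s * y) + norm (a * u)"
      by (rule norm_triangle_ineq)
    finally show ?thesis by (simp add: norm_mult)
  qed
  have M2: "M2 \<ge> 0" using assms(1) norm_ge_zero order_trans by blast
  have b1: "norm s * norm y \<le> M2 * K" using assms M2 by (intro mult_mono) auto
  have b2: "norm a * norm u \<le> M1 * norm u" using assms by (intro mult_right_mono) auto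
  have b3: "norm b * norm v \<le> M1 * norm v" using assms by (intro mult_right_mono) auto
  have L: "norm (s * y + a * u + b * v) \<le> M2 * K + M1 * norm u + M1 * norm v"
    using tr b1 b2 b3 by linarith
  have nn: "0 \<le> M2 * K + M1 * norm u + M1 * norm v"
    using L norm_ge_zero[of "s * y + a * u + b * v"] by linarith
  have "norm (s * y + a * u + b * v) * norm t \<le> (M2 * K + M1 * norm u + M1 * norm v) * K"
    using L nn assms(5) K by (intro mult_mono) auto
  then show ?thesis unfolding e by (simp add: algebra_simps)
qed


theorem lemma6:
  fixes q :: "nat \<Rightarrow> nat \<Rightarrow> nat \<Rightarrow> complex"
    and Y \<Theta> :: "nat \<Rightarrow> nat \<Rightarrow> complex"
    and C :: real
  assumes tridiag: "\<And>N i j. 1 \<le> i \<Longrightarrow> i \<le> N \<Longrightarrow> 1 \<le> j \<Longrightarrow> j \<le> N \<Longrightarrow>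
                       (j > i + 1 \<or> i > j + 1) \<Longrightarrow> q N i j = 0"
    and cond1: "(\<lambda>N. Max ((\<lambda>j. max (norm (q N j (j - 1))) (norm (q N j (j + 1)))) ` {1..N}))
                  \<longlonglongrightarrow> 0"
    and cond2: "(\<lambda>N. real (N + 1) *
                  Max ((\<lambda>j. norm (q N j (j - 1) + q N j j + q N j (j + 1))) ` {1..N}))
                  \<longlonglongrightarrow> 0"
    and Cpos: "C > 0"
    and bound: "\<And>N. N \<ge> 1 \<Longrightarrow>
        max (Re (cinnerN N (matvec N (Kmat N) (Y N)) (Y N)))
            (Re (cinnerN N (matvec N (Kmat N) (\<Theta> N)) (\<Theta> N))) \<le> C"
  shows "(\<lambda>N. cinnerN N (matvec N (q N) (Y N)) (\<Theta> N)) \<longlonglongrightarrow> 0"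
proof -
  define M1 where "M1 N = Max ((\<lambda>j. max (norm (q N j (j - 1))) (norm (q N j (j + 1)))) ` {1..N})" for N
  define M2 where "M2 N = Max ((\<lambda>j. norm (q N j (j - 1) + q N j j + q N j (j + 1))) ` {1..N})" for N
  have main: "norm (cinnerN N (matvec N (q N) (Y N)) (\<Theta> N)) \<le> C * (real (N+1) * M2 N + 2 * M1 N)"
    if N1: "N \<ge> 1" for N
  proof -
    let ?zY = "ext N (Y N)" and ?zT = "ext N (\<Theta> N)"
    let ?d = "\<lambda>i. ?zY (Suc i) - ?zY i"
    let ?K = "sqrt C"
    have bY: "Re (cinnerN N (matvec N (Kmat N) (Y N)) (Y N)) \<le> C"
      and bT: "Re (cinnerN N (matvec N (Kmat N) (\<Theta> N)) (\<Theta> N)) \<le> C"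
      using bound[OF N1] by auto
    have S: "(\<Sum>i<N+1. cmod (?d i)) \<le> ?K" by (rule sum_d_bound[OF N1 bY])
    have ST: "(\<Sum>i<N+1. cmod (?zT (Suc i) - ?zT i)) \<le> ?K" by (rule sum_d_bound[OF N1 bT])
    have zY: "cmod (?zY j) \<le> ?K" for j using ext_bound[of N "Y N" j] S by linarith
    have zT: "cmod (?zT j) \<le> ?K" for j using ext_bound[of N "\<Theta> N" j] ST by linarith
    have m1a: "norm (q N j (j - 1)) \<le> M1 N" and m1b: "norm (q N j (j + 1)) \<le> M1 N"
      and m2: "norm (q N j (j - 1) + q N j j + q N j (j + 1)) \<le> M2 N" if j: "j \<in> {1..N}" for j
    proof -
      have "max (norm (q N j (j - 1))) (norm (q N j (j + 1))) \<le> M1 N"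
        unfolding M1_def by (rule Max_ge) (use j in auto)
      then show "norm (q N j (j - 1)) \<le> M1 N" "norm (q N j (j + 1)) \<le> M1 N" by auto
      show "norm (q N j (j - 1) + q N j j + q N j (j + 1)) \<le> M2 N"
        unfolding M2_def by (rule Max_ge) (use j in auto)
    qed
    have M1nn: "M1 N \<ge> 0" using m1a[of 1] N1 by (meson atLeastAtMost_iff le_refl norm_ge_zero order_trans)
    have eq: "cinnerN N (matvec N (q N) (Y N)) (\<Theta> N) =
      (\<Sum>j\<in>{1..N}. ((q N j (j - 1) + q N j j + q N j (j + 1)) * ?zY j
          + q N j (j - 1) * (?zY (j-1) - ?zY j) + q N j (j+1) * (?zY (j+1) - ?zY j)) * cnj (?zT j))"
      unfolding cinnerN_def
    proof (rule sum.cong)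
      fix j assume j: "j \<in> {1..N}"
      have "matvec N (q N) (Y N) j = q N j (j-1) * ?zY (j-1) + q N j j * ?zY j + q N j (j+1) * ?zY (j+1)"
        by (rule Q_matvec) (use tridiag j in auto)
      moreover have "\<Theta> N j = ?zT j" using j by (simp add: ext_def)
      ultimately show "matvec N (q N) (Y N) j * cnj (\<Theta> N j) = ((q N j (j - 1) + q N j j + q N j (j + 1)) * ?zY j
          + q N j (j - 1) * (?zY (j-1) - ?zY j) + q N j (j+1) * (?zY (j+1) - ?zY j)) * cnj (?zT j)"
        by (simp add: algebra_simps)
    qed simp
    have "norm (cinnerN N (matvec N (q N) (Y N)) (\<Theta> N)) \<le>
      (\<Sum>j\<in>{1..N}. norm (((q N j (j - 1) + q N j j + q N j (j + 1)) * ?zY j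
          + q N j (j - 1) * (?zY (j-1) - ?zY j) + q N j (j+1) * (?zY (j+1) - ?zY j)) * cnj (?zT j)))"
      unfolding eq by (rule norm_sum)
    also have "\<dots> \<le> (\<Sum>j\<in>{1..N}. M2 N * ?K * ?K + M1 N * cmod (?d (j-1)) * ?K + M1 N * cmod (?d j) * ?K)"
    proof (rule sum_mono)
      fix j assume j: "j \<in> {1..N}"
      have "norm (((q N j (j - 1) + q N j j + q N j (j + 1)) * ?zY j
          + q N j (j - 1) * (?zY (j-1) - ?zY j) + q N j (j+1) * (?zY (j+1) - ?zY j)) * cnj (?zT j))
         \<le> M2 N * ?K * ?K + M1 N * cmod (?zY (j-1) - ?zY j) * ?K + M1 N * cmod (?zY (j+1) - ?zY j) * ?K"
        by (rule ptw_bound) (use m1a m1b m2 zY zT j in auto)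
      moreover have "cmod (?zY (j-1) - ?zY j) = cmod (?d (j-1))"
        using j by (simp add: norm_minus_commute)
      ultimately show "norm (((q N j (j - 1) + q N j j + q N j (j + 1)) * ?zY j
          + q N j (j - 1) * (?zY (j-1) - ?zY j) + q N j (j+1) * (?zY (j+1) - ?zY j)) * cnj (?zT j))
         \<le> M2 N * ?K * ?K + M1 N * cmod (?d (j-1)) * ?K + M1 N * cmod (?d j) * ?K"
        by simp
    qed
    also have "\<dots> = real N * (M2 N * C) + M1 N * ?K * (\<Sum>j\<in>{1..N}. cmod (?d (j-1)))
        + M1 N * ?K * (\<Sum>j\<in>{1..N}. cmod (?d j))"
      using Cpos by (simp add: sum.distrib sum_distrib_left algebra_simps)
    also have "\<dots> \<le> real (N+1) * (M2 N * C) + M1 N * ?K * ?K + M1 N * ?K * ?K"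
    proof -
      have s1: "(\<Sum>j\<in>{1..N}. cmod (?d (j-1))) \<le> ?K"
      proof -
        have im: "{1..N} = Suc ` {..<N}"
          by (rule image_Suc_lessThan[symmetric])
        have "(\<Sum>j\<in>{1..N}. cmod (?d (j-1))) = (\<Sum>i<N. cmod (?d i))"
          unfolding im by (subst sum.reindex) auto
        also have "\<dots> \<le> (\<Sum>i<N+1. cmod (?d i))" by (rule sum_mono2) auto
        finally show ?thesis using S by linarith
      qed
      have s2: "(\<Sum>j\<in>{1..N}. cmod (?d j)) \<le> ?K"
      proof -
        have "(\<Sum>j\<in>{1..N}. cmod (?d j)) \<le> (\<Sum>i<N+1. cmod (?d i))" by (rule sum_mono2) auto
        then show ?thesis using S by linarith
      qed
      have m2nn: "M2 N * C \<ge> 0" using m2[of 1] N1 Cpos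
        by (meson atLeastAtMost_iff le_refl norm_ge_zero order_trans less_imp_le mult_nonneg_nonneg)
      have "real N * (M2 N * C) \<le> real (N+1) * (M2 N * C)" using m2nn by (intro mult_right_mono) auto
      moreover have "M1 N * ?K * (\<Sum>j\<in>{1..N}. cmod (?d (j-1))) \<le> M1 N * ?K * ?K"
        using s1 M1nn Cpos by (intro mult_left_mono) auto
      moreover have "M1 N * ?K * (\<Sum>j\<in>{1..N}. cmod (?d j)) \<le> M1 N * ?K * ?K"
        using s2 M1nn Cpos by (intro mult_left_mono) auto
      ultimately show ?thesis by linarith
    qed
    also have "\<dots> = C * (real (N+1) * M2 N + 2 * M1 N)"
      using Cpos by (simp add: algebra_simps)
    finally show ?thesis .
  qed
  show ?thesis
  proof (rule Lim_null_comparison)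
    show "\<forall>\<^sub>F N in sequentially. norm (cinnerN N (matvec N (q N) (Y N)) (\<Theta> N)) \<le> C * (real (N+1) * M2 N + 2 * M1 N)"
      using main by (intro eventually_sequentiallyI[of 1]) auto
    have "(\<lambda>N. real (N+1) * M2 N + 2 * M1 N) \<longlonglongrightarrow> 0 + 2 * 0"
      using cond2 cond1 unfolding M1_def M2_def by (intro tendsto_intros) auto
    then show "(\<lambda>N. C * (real (N+1) * M2 N + 2 * M1 N)) \<longlonglongrightarrow> 0"
      using tendsto_mult_right_zero by fastforce
  qed
qed

end
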